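(* Consider the setting described in the context and suppose the stepsizes satisfy conditions (A) and (B), and either (C1) or (C2). Then the PDHG method converges in the residuals: $$\lim_{k\to\infty}\|P_k\|^2+\|D_k\|^2=0,$$ where $P_{k+1}=\frac{1}{\tau_k}(x_k-x_{k+1})-A^T(y_k-y_{k+1})$ and $D_{k+1}=\frac{1}{\sigma_k}(y_k-y_{k+1})-A(x_k-x_{k+1})$.
   Context: Let $A\in\mathbb{R}^{M\times N}$, let $f$ and $g$ be convex functions on $\mathbb{R}^N$ and $\mathbb{R}^M$, and let $X\subset\mathbb{R}^N$, $Y\subset\mathbb{R}^M$ be convex sets; consider the saddle-point problem $\min_{x\in X}\max_{y\in Y} f(x)+y^TAx-g(y)$. Let $\chi_C$ denote the characteristic function of a set $C$ ($0$ on $C$, $+\infty$ off $C$), and let $F=\partial(f+\chi_X)$, $G=\partial(g+\chi_Y)$. It is assumed that the problem is feasible (there is $u^\star=(x^\star,y^\star)$ with $0\in F(x^\star)+A^Ty^\star$, $0\in G(y^\star)-Ax^\star$) and that the minimizations below have solutions. The PDHG method with stepsizes $\tau_k,\sigma_k>0$ starts from $x_0,y_0$ and iterates $x_{k+1}=\arg\min_{x\in X} f(x)+\frac{1}{2\tau_k}\|x-(x_k-\tau_kA^Ty_k)\|^2$, $y_{k+1}=\arg\min_{y\in Y} g(y)+\frac{1}{2\sigma_k}\|y-(y_k+\sigma_kA(2x_{k+1}-x_k))\|^2$. (One has $P_{k+1}\in F(x_{k+1})+A^Ty_{k+1}$ and $D_{k+1}\in G(y_{k+1})-Ax_{k+1}$.)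 Write $u_k=(x_k,y_k)$, $M_k=\begin{pmatrix}\tau_k^{-1}I & -A^T\\ -A & \sigma_k^{-1}I\end{pmatrix}$, $H_k=\begin{pmatrix}\tau_k^{-1}I & 0\\ 0 & \sigma_k^{-1}I\end{pmatrix}$, and for a symmetric (possibly indefinite) matrix $M$, $\|u\|_M^2:=u^TMu$. Let $\phi_k=\max\{(\tau_k-\tau_{k+1})/\tau_k,\ (\sigma_k-\sigma_{k+1})/\sigma_k,\ 0\}$. Conditions: (A) the sequences $\{\tau_k\}$ and $\{\sigma_k\}$ are bounded; (B) $\sum_{k\ge0}\phi_k<C_\phi<\infty$ for some constant $C_\phi$; (C1) there is a constant $L$ with $\tau_k\sigma_k<L<\rho(A^TA)^{-1}$ for all $k>0$ ($\rho$ = spectral radius); (C2) either $X$ or $Y$ is bounded and there is $c\in(0,1)$ with $\|u_{k+1}-u_k\|_{M_k}^2\ge c\|u_{k+1}-u_k\|_{H_k}^2$ for all $k>0$. *)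

theory Defs
  imports "HOL-Analysis.Analysis"
begin

text \<open>Subdifferential of f + chi_C at x (chi_C the characteristic function of C):
  empty off C; on C the set of v with f z >= f x + v.(z - x) for all z in C.\<close>
definition subdiff_on :: "('a::real_inner \<Rightarrow> real) \<Rightarrow> 'a set \<Rightarrow> 'a \<Rightarrow> 'a set" where
  "subdiff_on f C x = {v. x \<in> C \<and> (\<forall>z\<in>C. f x + inner v (z - x) \<le> f z)}"

definition cplx_eigenvalue :: "real^'n^'n \<Rightarrow> complex \<Rightarrow> bool" where
  "cplx_eigenvalue B c \<longleftrightarrow>
     (\<exists>v::complex^'n. v \<noteq> 0 \<and> (\<chi> i j. complex_of_real (B $ i $ j)) *v v = c *s v)"

definition spec_radius :: "real^'n^'n \<Rightarrow> real" where
  "spec_radius B = Max {cmod c | c. cplx_eigenvalue B c}"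

definition M_quad :: "real \<Rightarrow> real \<Rightarrow> real^'n^'m \<Rightarrow> real^'n \<Rightarrow> real^'m \<Rightarrow> real" where
  "M_quad t s A dx dy =
     inner dx dx / t - inner dx (transpose A *v dy) - inner dy (A *v dx) + inner dy dy / s"

definition H_quad :: "real \<Rightarrow> real \<Rightarrow> real^'n \<Rightarrow> real^'m \<Rightarrow> real" where
  "H_quad t s dx dy = inner dx dx / t + inner dy dy / s"

end

theory Submission
  imports Defs "HOL-Computational_Algebra.Polynomial"
begin

definition cmat :: "real^'n^'n \<Rightarrow> complex^'n^'n" where
  "cmat B = (\<chi> i j. complex_of_real (B $ i $ j))"

definition shiftm :: "complex^'n^'n \<Rightarrow> complex \<Rightarrow> complex^'n^'n" where
  "shiftm M c = (\<chi> i j. M $ i $ j - (if i = j then c else 0))"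

lemma shiftm_mult: "shiftm M c *v v = M *v v - c *s v"
proof -
  have "(\<Sum>j\<in>UNIV. (M $ i $ j - (if i = j then c else 0)) * v $ j) =
        (\<Sum>j\<in>UNIV. M $ i $ j * v $ j) - c * v $ i" for i
  proof -
    have "(\<Sum>j\<in>UNIV. (M $ i $ j - (if i = j then c else 0)) * v $ j) =
        (\<Sum>j\<in>UNIV. M $ i $ j * v $ j) - (\<Sum>j\<in>UNIV. (if i = j then c * v $ j else 0))"
      unfolding sum_subtractf[symmetric] by (rule sum.cong) (auto simp: left_diff_distrib)
    also have "\<dots> = (\<Sum>j\<in>UNIV. M $ i $ j * v $ j) - c * v $ i" by simp
    finally show ?thesis .
  qed
  then show ?thesis by (simp add: vec_eq_iff shiftm_def matrix_vector_mult_def)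
qed

lemma eig_iff_det: "cplx_eigenvalue B c \<longleftrightarrow> det (shiftm (cmat B) c) = 0"
proof -
  have "det (shiftm (cmat B) c) \<noteq> 0 \<longleftrightarrow> (\<forall>x. shiftm (cmat B) c *v x = 0 \<longrightarrow> x = 0)"
    using invertible_det_nz invertible_left_inverse matrix_left_invertible_ker by metis
  then show ?thesis unfolding cplx_eigenvalue_def shiftm_mult cmat_def[symmetric]
    by auto
qed

definition charp :: "complex^'n^'n \<Rightarrow> complex poly" where
  "charp M = (\<Sum>p\<in>{p. p permutes (UNIV::'n set)}. smult (of_int (sign p))
      (\<Prod>i\<in>UNIV. [:M $ i $ p i, if p i = i then -1 else 0:]))"

lemma poly_charp: "poly (charp M) c = det (shiftm M c)"
  unfolding charp_def det_def shiftm_def poly_sum poly_prod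
  by (rule sum.cong) (auto intro!: prod.cong simp: poly_prod)

lemma eig_bound:
  fixes B :: "real^'n^'n"
  assumes "cplx_eigenvalue B c"
  shows "cmod c \<le> (\<Sum>i\<in>UNIV. \<Sum>j\<in>UNIV. \<bar>B $ i $ j\<bar>)"
proof -
  obtain v :: "complex^'n" where v0: "v \<noteq> 0" and ev: "(\<chi> i j. complex_of_real (B $ i $ j)) *v v = c *s v"
    using assms unfolding cplx_eigenvalue_def by blast
  define m where "m = Max (range (\<lambda>j. cmod (v$j)))"
  have mge: "cmod (v$j) \<le> m" for j unfolding m_def by (rule Max_ge) auto
  have "m \<in> range (\<lambda>j. cmod (v$j))" unfolding m_def by (rule Max_in) auto
  then obtain i where mi: "m = cmod (v$i)" by auto
  have "m > 0"
  proof (rule ccontr)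
    assume "\<not> m > 0"
    then have "\<forall>j. v$j = 0" using mge by (metis norm_le_zero_iff order.trans not_less)
    then show False using v0 by (simp add: vec_eq_iff)
  qed
  have "cmod c * m = cmod ((c *s v)$i)" using mi by (simp add: norm_mult)
  also have "\<dots> = cmod (\<Sum>j\<in>UNIV. complex_of_real (B $ i $ j) * v $ j)"
    using ev[symmetric] by (simp add: matrix_vector_mult_def)
  also have "\<dots> \<le> (\<Sum>j\<in>UNIV. cmod (complex_of_real (B $ i $ j) * v $ j))"
    by (rule norm_sum)
  also have "\<dots> \<le> (\<Sum>j\<in>UNIV. \<bar>B $ i $ j\<bar> * m)"
    by (rule sum_mono) (simp add: norm_mult mge mult_left_mono)
  also have "\<dots> = (\<Sum>j\<in>UNIV. \<bar>B $ i $ j\<bar>) * m" by (simp add: sum_distrib_right)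
  also have "\<dots> \<le> (\<Sum>i\<in>UNIV. \<Sum>j\<in>UNIV. \<bar>B $ i $ j\<bar>) * m"
    using \<open>m > 0\<close> by (intro mult_right_mono member_le_sum) (auto intro: sum_nonneg)
  finally show ?thesis using \<open>m > 0\<close> by simp
qed

lemma eig_finite: "finite {c. cplx_eigenvalue B c}"
proof -
  define S where "S = (\<Sum>i\<in>UNIV. \<Sum>j\<in>UNIV. \<bar>B $ i $ j\<bar>)"
  have "\<not> cplx_eigenvalue B (complex_of_real (S + 1))"
  proof
    assume "cplx_eigenvalue B (complex_of_real (S + 1))"
    from eig_bound[OF this] have "cmod (complex_of_real (S+1)) \<le> S" unfolding S_def .
    then have "\<bar>S+1\<bar> \<le> S" by (simp only: norm_of_real)
    then show False by simp
  qed
  then have "poly (charp (cmat B)) (complex_of_real (S + 1)) \<noteq> 0"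
    by (simp add: poly_charp eig_iff_det)
  then have "charp (cmat B) \<noteq> 0" by auto
  then have "finite {c. poly (charp (cmat B)) c = 0}" by (rule poly_roots_finite)
  then show ?thesis by (simp add: eig_iff_det poly_charp)
qed

lemma real_eig_le_spec:
  fixes B :: "real^'n^'n" and v :: "real^'n"
  assumes "v \<noteq> 0" "B *v v = l *\<^sub>R v"
  shows "\<bar>l\<bar> \<le> spec_radius B"
proof -
  define w :: "complex^'n" where "w = (\<chi> i. complex_of_real (v$i))"
  have "w \<noteq> 0" using assms(1) by (auto simp: w_def vec_eq_iff)
  moreover have "(\<chi> i j. complex_of_real (B $ i $ j)) *v w = complex_of_real l *s w"
  proof -
    have "(\<Sum>j\<in>UNIV. complex_of_real (B $ i $ j) * complex_of_real (v $ j)) =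
          complex_of_real l * complex_of_real (v $ i)" for i
    proof -
      have "(B *v v)$i = l * v$i" using assms(2) by simp
      then have "(\<Sum>j\<in>UNIV. B $ i $ j * v $ j) = l * v$i" by (simp add: matrix_vector_mult_def)
      then have "complex_of_real (\<Sum>j\<in>UNIV. B $ i $ j * v $ j) = complex_of_real (l * v$i)" by simp
      then show ?thesis by (simp add: of_real_sum)
    qed
    then show ?thesis by (simp add: vec_eq_iff matrix_vector_mult_def w_def)
  qed
  ultimately have "cplx_eigenvalue B (complex_of_real l)" unfolding cplx_eigenvalue_def by blast
  then have "cmod (complex_of_real l) \<in> {cmod c | c. cplx_eigenvalue B c}" by blast
  moreover have "finite {cmod c | c. cplx_eigenvalue B c}"
    using eig_finite[of B] by (simp add: setcompr_eq_image)
  ultimately show ?thesis unfolding spec_radius_def using Max_ge by fastforce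
qed

lemma inner_transpose: "inner (transpose A *v z) w = inner z ((A::real^'n^'m) *v w)"
  by (simp add: dot_lmul_matrix)

lemma nexp_gen: "(norm (a + t *\<^sub>R b))^2 = (norm a)^2 + 2 * t * inner a b + t^2 * (norm (b::'a::real_inner))^2"
  by (simp only: power2_norm_eq_inner) (simp add: inner_add_left inner_add_right inner_commute algebra_simps power2_eq_square)

lemma quad_zero_lemma:
  fixes d K :: real
  assumes "K \<ge> 0" "\<And>t. 2 * t * d \<le> t^2 * K"
  shows "d = 0"
proof (rule ccontr)
  assume "d \<noteq> 0"
  define t where "t = d / (K + 1)"
  have "2 * t * d \<le> t^2 * K" by (rule assms(2))
  moreover have "t^2 * K \<le> t^2 * (K+1)" by (simp add: mult_left_mono)
  ultimately have "2 * t * d \<le> t^2 * (K+1)" by linarith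
  moreover have "2 * t * d = 2 * d^2 / (K+1)" unfolding t_def by (simp add: power2_eq_square)
  moreover have "t^2 * (K+1) = d^2 / (K+1)"
  proof -
    have kp: "K + 1 \<noteq> 0" using assms(1) by simp
    show ?thesis unfolding t_def power_divide using kp by (simp add: power2_eq_square)
  qed
  ultimately have "2 * d^2 / (K+1) \<le> d^2 / (K+1)" by simp
  then have "2 * d^2 \<le> d^2" using assms(1) by (simp add: divide_le_cancel)
  then show False using \<open>d \<noteq> 0\<close> by simp
qed

lemma norm_matrix_bound:
  fixes A :: "real^'n^'m"
  shows "(norm (A *v u))^2 \<le> spec_radius (transpose A ** A) * (norm u)^2"
proof -
  define f where "f = (\<lambda>u. (norm (A *v u))^2)"
  have cont: "continuous_on (sphere 0 1) f" unfolding f_def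
    by (intro continuous_intros linear_continuous_on matrix_vector_mult_linear_continuous_on)
  have ne: "sphere (0::real^'n) 1 \<noteq> {}"
  proof -
    obtain i :: 'n where True by simp
    have "norm (axis i (1::real)) = 1" by simp
    then have "axis i (1::real) \<in> sphere 0 1" by simp
    then show ?thesis by blast
  qed
  obtain v where v1: "v \<in> sphere 0 1" and vmax: "\<forall>y\<in>sphere 0 1. f y \<le> f v"
    using continuous_attains_sup[OF compact_sphere ne cont] by blast
  have nv: "norm v = 1" using v1 by simp
  define l where "l = f v"
  have fle: "f w \<le> l * (norm w)^2" for w
  proof (cases "w = 0")
    case True then show ?thesis by (simp add: f_def)
  next
    case False
    then have "(1 / norm w) *\<^sub>R w \<in> sphere 0 1" by simp
    then have "f ((1 / norm w) *\<^sub>R w) \<le> l" using vmax l_def by blast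
    moreover have "f ((1 / norm w) *\<^sub>R w) = f w / (norm w)^2"
      by (simp add: f_def matrix_vector_mult_scaleR power2_eq_square divide_simps)
    ultimately show ?thesis using False by (simp add: divide_le_eq)
  qed
  have l0: "l \<ge> 0" unfolding l_def f_def by simp
  have fexp: "f (a + t *\<^sub>R b) = f a + 2 * t * inner (A *v a) (A *v b) + t^2 * f b" for a b t
    unfolding f_def matrix_vector_right_distrib matrix_vector_mult_scaleR nexp_gen ..
  note nexp = nexp_gen
  have key: "inner (A *v v) (A *v w) - l * inner v w = 0" for w
  proof (rule quad_zero_lemma)
    show "l * (norm w)^2 - f w \<ge> 0" using fle[of w] by simp
    fix t
    have "f (v + t *\<^sub>R w) \<le> l * (norm (v + t *\<^sub>R w))^2" by (rule fle)
    then have "l + 2 * t * inner (A *v v) (A *v w) + t^2 * f w \<le>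
               l * (1 + 2 * t * inner v w + t^2 * (norm w)^2)"
      unfolding fexp nexp nv l_def by simp
    then show "2 * t * (inner (A *v v) (A *v w) - l * inner v w) \<le> t^2 * (l * (norm w)^2 - f w)"
      by (simp add: algebra_simps)
  qed
  define B where "B = transpose A ** A"
  define z where "z = B *v v - l *\<^sub>R v"
  have "inner z w = 0" for w
  proof -
    have "inner (B *v v) w = inner (A *v v) (A *v w)"
      unfolding B_def by (simp add: matrix_vector_mul_assoc[symmetric] dot_lmul_matrix)
    then show ?thesis using key[of w] unfolding z_def by (simp add: inner_diff_left)
  qed
  then have "z = 0" by (metis inner_eq_zero_iff)
  then have "B *v v = l *\<^sub>R v" unfolding z_def by simp
  moreover have "v \<noteq> 0" using nv by auto
  ultimately have "\<bar>l\<bar> \<le> spec_radius B" by (intro real_eig_le_spec) auto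
  then have "l \<le> spec_radius B" by simp
  then show ?thesis using fle[of u] unfolding f_def B_def
    by (meson order_trans mult_right_mono zero_le_power2)
qed


lemma inner_transpose2: "inner u (transpose A *v v) = inner ((A::real^'n^'m) *v u) v"
  by (metis dot_lmul_matrix inner_commute transpose_matrix_vector)

lemma fejer_alg:
  fixes A :: "real^'n^'m" and a a0 :: "real^'n" and b b0 :: "real^'m"
  assumes t: "t > 0" and s: "s > 0"
    and h1: "inner (a0 - a) a / t - inner b0 (A *v a) \<ge> 0"
    and h2: "inner (b0 - b) b / s + inner (A *v (2 *\<^sub>R a - a0)) b \<ge> 0"
  shows "M_quad t s A a b + M_quad t s A (a - a0) (b - b0) \<le> M_quad t s A a0 b0"
proof -
  have e1: "inner (a0 - a) a / t = (inner a0 a - inner a a) / t" by (simp add: inner_diff_left)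
  have e2: "inner (b0 - b) b / s = (inner b0 b - inner b b) / s" by (simp add: inner_diff_left)
  have e3: "inner (A *v (2 *\<^sub>R a - a0)) b = 2 * inner (A *v a) b - inner (A *v a0) b"
    by (simp add: matrix_vector_mult_diff_distrib matrix_vector_mult_scaleR inner_diff_left)
  have q: "M_quad t s A a0 b0 - M_quad t s A a b - M_quad t s A (a - a0) (b - b0)
     = 2 * ((inner a0 a - inner a a) / t + (inner b0 b - inner b b) / s
        - inner b0 (A *v a) + 2 * inner (A *v a) b - inner (A *v a0) b)"
    unfolding M_quad_def inner_transpose2
    by (simp add: matrix_vector_mult_diff_distrib inner_diff_left inner_diff_right inner_commute
        diff_divide_distrib add_divide_distrib algebra_simps)
  define X1 where "X1 = (inner a0 a - inner a a) / t"
  define X2 where "X2 = (inner b0 b - inner b b) / s"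
  have "0 \<le> X1 + X2 - inner b0 (A *v a) + 2 * inner (A *v a) b - inner (A *v a0) b"
    using h1 h2 unfolding e1 e2 e3 X1_def[symmetric] X2_def[symmetric] by linarith
  then show ?thesis using q unfolding X1_def[symmetric] X2_def[symmetric] by (smt (verit))
qed

lemma small_t_lemma:
  fixes g K :: real
  assumes "K \<ge> 0" "\<And>t. 0 < t \<Longrightarrow> t \<le> 1 \<Longrightarrow> g \<le> t * K"
  shows "g \<le> 0"
proof (rule ccontr)
  assume "\<not> g \<le> 0"
  then have g0: "g > 0" by simp
  define t where "t = min 1 (g / (2 * (K + 1)))"
  have t0: "t > 0" unfolding t_def using g0 assms(1) by simp
  have t1: "t \<le> 1" unfolding t_def by simp
  have "t * K \<le> (g / (2 * (K + 1))) * K" unfolding t_def using assms(1) by (intro mult_right_mono) auto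
  also have "\<dots> < g"
  proof -
    have "(g / (2 * (K + 1))) * K = g * (K / (2 * (K+1)))" by simp
    moreover have "K / (2 * (K+1)) < 1" using assms(1) by (simp add: divide_less_eq)
    ultimately show ?thesis using g0 by (metis mult.right_neutral mult_strict_left_mono)
  qed
  finally show False using assms(2)[OF t0 t1] by simp
qed

lemma prox_vi:
  fixes f :: "'a::real_inner \<Rightarrow> real"
  assumes fc: "convex_on UNIV f" and Xc: "convex X" and x1: "x1 \<in> X" and tau: "tau > 0"
    and opt: "\<forall>z\<in>X. f x1 + (norm (x1 - c))\<^sup>2 / (2 * tau) \<le> f z + (norm (z - c))\<^sup>2 / (2 * tau)"
    and z: "z \<in> X"
  shows "f x1 + inner ((1 / tau) *\<^sub>R (c - x1)) (z - x1) \<le> f z"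
proof -
  define d where "d = z - x1"
  have "f x1 - f z - inner (x1 - c) d / tau \<le> 0"
  proof (rule small_t_lemma)
    show "(norm d)^2 / (2 * tau) \<ge> 0" using tau by simp
    fix t :: real assume t0: "0 < t" and t1: "t \<le> 1"
    define zt where "zt = x1 + t *\<^sub>R d"
    have ztX: "zt \<in> X"
    proof -
      have "zt = (1 - t) *\<^sub>R x1 + t *\<^sub>R z" unfolding zt_def d_def by (simp add: algebra_simps)
      then show ?thesis using Xc x1 z t0 t1 by (simp add: convex_def)
    qed
    have fz: "f zt \<le> (1 - t) * f x1 + t * f z"
    proof -
      have "zt = (1 - t) *\<^sub>R x1 + t *\<^sub>R z" unfolding zt_def d_def by (simp add: algebra_simps)
      then show ?thesis using convex_onD[OF fc, of t x1 z] t0 t1 by simp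
    qed
    have nz: "(norm (zt - c))^2 = (norm (x1 - c))^2 + 2 * t * inner (x1 - c) d + t^2 * (norm d)^2"
    proof -
      have e: "zt - c = (x1 - c) + t *\<^sub>R d" unfolding zt_def by simp
      show ?thesis unfolding e by (rule nexp_gen)
    qed
    have "f x1 + (norm (x1 - c))\<^sup>2 / (2 * tau) \<le> f zt + (norm (zt - c))\<^sup>2 / (2 * tau)"
      using opt ztX by blast
    then have "f x1 \<le> (1 - t) * f x1 + t * f z + (2 * t * inner (x1 - c) d + t^2 * (norm d)^2) / (2 * tau)"
      using fz unfolding nz by (simp add: add_divide_distrib)
    then have "t * (f x1 - f z) \<le> t * (inner (x1 - c) d / tau + t * ((norm d)^2 / (2 * tau)))"
      using tau by (simp add: field_simps power2_eq_square)
    then have "f x1 - f z \<le> inner (x1 - c) d / tau + t * ((norm d)^2 / (2 * tau))"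
      using t0 by (simp add: mult_le_cancel_left_pos)
    then show "f x1 - f z - inner (x1 - c) d / tau \<le> t * ((norm d)^2 / (2 * tau))" by simp
  qed
  moreover have "inner ((1 / tau) *\<^sub>R (c - x1)) (z - x1) = - inner (x1 - c) d / tau"
    unfolding d_def by (simp add: inner_diff_left)
  ultimately show ?thesis by simp
qed

lemma seq_conv:
  fixes U w d e :: "nat \<Rightarrow> real"
  assumes U0: "\<And>k. U k \<ge> 0" and w0: "\<And>k. w k \<ge> 0" and d0: "\<And>k. d k \<ge> 0"
    and e0: "\<And>k. e k \<ge> 0" and sd: "summable d" and se: "summable e"
    and rec: "\<And>k. U (Suc k) \<le> (1 + d k) * (U k - w k) + e k"
  shows "w \<longlonglongrightarrow> 0"
proof -
  have rec2: "U (Suc k) \<le> (1 + d k) * U k + e k - w k" for k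
  proof -
    have "(1 + d k) * w k \<ge> w k" using d0[of k] w0[of k] by (simp add: algebra_simps)
    then show ?thesis using rec[of k] by (simp add: algebra_simps)
  qed
  have bnd: "U n \<le> exp (\<Sum>i<n. d i) * (U 0 + (\<Sum>i<n. e i))" for n
  proof (induction n)
    case 0 then show ?case by simp
  next
    case (Suc n)
    have "U (Suc n) \<le> (1 + d n) * U n + e n" using rec2[of n] w0[of n] by linarith
    also have "\<dots> \<le> exp (d n) * (exp (\<Sum>i<n. d i) * (U 0 + (\<Sum>i<n. e i))) + e n"
      using Suc U0[of n] d0[of n] by (intro add_mono mult_mono) auto
    also have "\<dots> = exp (\<Sum>i<Suc n. d i) * (U 0 + (\<Sum>i<n. e i)) + e n"
      by (simp add: exp_add)
    also have "\<dots> \<le> exp (\<Sum>i<Suc n. d i) * (U 0 + (\<Sum>i<n. e i)) + exp (\<Sum>i<Suc n. d i) * e n"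
    proof -
      have "(\<Sum>i<Suc n. d i) \<ge> 0" using d0 by (simp add: sum_nonneg)
      then have "exp (\<Sum>i<Suc n. d i) \<ge> 1" by simp
      then show ?thesis using e0[of n] by (simp add: mult_le_cancel_right1)
    qed
    also have "\<dots> = exp (\<Sum>i<Suc n. d i) * (U 0 + (\<Sum>i<Suc n. e i))"
      by (simp add: algebra_simps)
    finally show ?case .
  qed
  define Ub where "Ub = exp (suminf d) * (U 0 + suminf e)"
  have Ub: "U n \<le> Ub" for n
  proof -
    have "(\<Sum>i<n. d i) \<le> suminf d" using sd d0 by (intro sum_le_suminf) auto
    moreover have "(\<Sum>i<n. e i) \<le> suminf e" using se e0 by (intro sum_le_suminf) auto
    ultimately have "exp (\<Sum>i<n. d i) * (U 0 + (\<Sum>i<n. e i)) \<le> Ub"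
      unfolding Ub_def using U0[of 0] e0 sum_nonneg[of "{..<n}" e]
      by (intro mult_mono add_mono) (auto simp: add_nonneg_nonneg)
    then show ?thesis using bnd[of n] by linarith
  qed
  have Ub0: "Ub \<ge> 0" using Ub[of 0] U0[of 0] by linarith
  have wle: "w k \<le> U k - U (Suc k) + Ub * d k + e k" for k
  proof -
    have "d k * U k \<le> d k * Ub" using d0[of k] Ub[of k] by (simp add: mult_left_mono)
    then show ?thesis using rec2[of k] by (simp add: algebra_simps)
  qed
  have ps: "(\<Sum>k<n. w k) \<le> U 0 - U n + Ub * (\<Sum>k<n. d k) + (\<Sum>k<n. e k)" for n
  proof (induction n)
    case 0 then show ?case by simp
  next
    case (Suc n) then show ?case using wle[of n] by (simp add: algebra_simps)
  qed
  have "(\<Sum>k\<le>n. w k) \<le> U 0 + Ub * suminf d + suminf e" for n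
  proof -
    have "(\<Sum>k<Suc n. d k) \<le> suminf d" using sd d0 by (intro sum_le_suminf) auto
    moreover have "(\<Sum>k<Suc n. e k) \<le> suminf e" using se e0 by (intro sum_le_suminf) auto
    moreover have "Ub * (\<Sum>k<Suc n. d k) \<le> Ub * suminf d"
      using calculation(1) Ub0 by (rule mult_left_mono)
    ultimately show ?thesis using ps[of "Suc n"] U0[of "Suc n"]
      unfolding lessThan_Suc_atMost by linarith
  qed
  then have "summable w" using w0 by (intro bounded_imp_summable) auto
  then show ?thesis by (rule summable_LIMSEQ_zero)
qed

lemma lower_bound:
  fixes tau phi :: "nat \<Rightarrow> real"
  assumes pos: "\<And>k. tau k > 0" and p0: "\<And>k. phi k \<ge> 0" and sp: "summable phi"
    and step: "\<And>k. tau (Suc k) \<ge> tau k * (1 - phi k)"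
  shows "\<exists>m>0. \<forall>k. tau k \<ge> m"
proof -
  have "(\<lambda>n. \<Sum>i<n. phi i) \<longlonglongrightarrow> suminf phi" using sp summable_LIMSEQ by blast
  then have "eventually (\<lambda>n. suminf phi - 1/2 < (\<Sum>i<n. phi i)) sequentially"
    by (rule order_tendstoD) simp
  then obtain N where N: "\<And>n. n \<ge> N \<Longrightarrow> suminf phi - 1/2 < (\<Sum>i<n. phi i)"
    unfolding eventually_sequentially by blast
  have tail: "(\<Sum>i\<in>{N..<k}. phi i) \<le> 1/2" if "k \<ge> N" for k
  proof -
    have "(\<Sum>i<k. phi i) = (\<Sum>i<N. phi i) + (\<Sum>i\<in>{N..<k}. phi i)"
      using that by (metis atLeast0LessThan sum.atLeastLessThan_concat zero_le)
    moreover have "(\<Sum>i<k. phi i) \<le> suminf phi" using sp p0 by (intro sum_le_suminf) auto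
    ultimately show ?thesis using N[of N] by simp
  qed
  have ind: "tau (N + j) \<ge> tau N * (1 - (\<Sum>i\<in>{N..<N+j}. phi i))" for j
  proof (induction j)
    case 0 then show ?case by simp
  next
    case (Suc j)
    have t1: "1 - phi (N + j) \<ge> 0"
    proof -
      have "phi (N+j) \<le> (\<Sum>i\<in>{N..<N+Suc j}. phi i)" using p0 by (intro member_le_sum) auto
      then show ?thesis using tail[of "N + Suc j"] by simp
    qed
    have "tau (N + Suc j) \<ge> tau (N + j) * (1 - phi (N + j))" using step[of "N+j"] by simp
    moreover have "tau (N + j) * (1 - phi (N + j)) \<ge> tau N * (1 - (\<Sum>i\<in>{N..<N+j}. phi i)) * (1 - phi (N + j))"
      using Suc t1 by (rule mult_right_mono)
    moreover have "tau N * (1 - (\<Sum>i\<in>{N..<N+j}. phi i)) * (1 - phi (N + j)) \<ge>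
                   tau N * (1 - (\<Sum>i\<in>{N..<N+Suc j}. phi i))"
    proof -
      have "(\<Sum>i\<in>{N..<N+j}. phi i) * phi (N + j) \<ge> 0" using p0 by (simp add: sum_nonneg)
      then have "(1 - (\<Sum>i\<in>{N..<N+j}. phi i)) * (1 - phi (N + j)) \<ge> 1 - (\<Sum>i\<in>{N..<N+Suc j}. phi i)"
        by (simp add: algebra_simps)
      then show ?thesis using pos[of N] by (simp add: mult.assoc mult_left_mono)
    qed
    ultimately show ?case by linarith
  qed
  define m where "m = min (tau N / 2) (Min (tau ` {..N}))"
  have "m > 0" unfolding m_def using pos by (simp add: Min_gr_iff)
  moreover have "tau k \<ge> m" for k
  proof (cases "k \<ge> N")
    case True
    then obtain j where k: "k = N + j" using le_Suc_ex by blast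
    have "tau k \<ge> tau N * (1 - 1/2)"
      using ind[of j] tail[of k] True pos[of N] unfolding k
      by (smt (verit, best) mult_left_mono)
    then show ?thesis unfolding m_def by simp
  next
    case False
    then have "Min (tau ` {..N}) \<le> tau k" by (intro Min_le) auto
    then show ?thesis unfolding m_def by simp
  qed
  ultimately show ?thesis by blast
qed

lemma Mq_eq: "M_quad t s A u v = (norm u)^2 / t - 2 * inner ((A::real^'n^'m) *v u) v + (norm v)^2 / s"
  unfolding M_quad_def inner_transpose2 power2_norm_eq_inner by (simp add: inner_commute)

lemma Hq_eq: "H_quad t s u v = (norm u)^2 / t + (norm v)^2 / s"
  unfolding H_quad_def power2_norm_eq_inner by simp

lemma real_boundX:
  fixes t s T N R p q i :: real
  assumes t: "t > 0" and s: "s > 0" and sT: "s \<le> T" and i: "\<bar>i\<bar> \<le> N * p * q"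
    and p: "0 \<le> p" "p \<le> R" and q: "0 \<le> q" and N: "0 \<le> N"
  shows "p^2/t - 2*i + q^2/s \<ge> -(2*T*N^2*R^2)"
    and "p^2 + q^2 \<le> R^2 + 2*T*(p^2/t - 2*i + q^2/s + 2*T*N^2*R^2)"
proof -
  have am: "2*N*p*q \<le> q^2/(2* s) + 2* s*N^2*p^2"
  proof -
    have "0 \<le> (q - 2* s*N*p)^2" by simp
    then have "4* s*N*p*q \<le> q^2 + 4* s^2*N^2*p^2" by (simp add: power2_eq_square algebra_simps)
    then have "(4* s*N*p*q) / (2* s) \<le> (q^2 + 4* s^2*N^2*p^2) / (2* s)"
      by (rule divide_right_mono) (use s in simp)
    moreover have "(4* s*N*p*q) / (2* s) = 2*N*p*q" using s by simp
    moreover have "(q^2 + 4* s^2*N^2*p^2) / (2* s) = q^2/(2* s) + 2* s*N^2*p^2" using s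
      by (simp add: add_divide_distrib power2_eq_square)
    ultimately show ?thesis by simp
  qed
  have pR: "p^2 \<le> R^2" using p by (simp add: power_mono)
  have "2* s*N^2*p^2 \<le> 2*T*N^2*R^2"
    using sT s pR N by (intro mult_mono) auto
  then have lo: "p^2/t - 2*i + q^2/s \<ge> p^2/t + q^2/(2* s) - 2*T*N^2*R^2"
    using am i by (simp add: field_simps)
  have pt: "p^2/t \<ge> 0" using t by simp
  have q2: "q^2/(2* s) \<ge> 0" using s by simp
  show "p^2/t - 2*i + q^2/s \<ge> -(2*T*N^2*R^2)" using lo pt q2 by linarith
  have "q^2 = 2* s*(q^2/(2* s))" using s by simp
  also have "\<dots> \<le> 2* s*(p^2/t - 2*i + q^2/s + 2*T*N^2*R^2)" using lo pt s by (intro mult_left_mono) auto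
  also have "\<dots> \<le> 2*T*(p^2/t - 2*i + q^2/s + 2*T*N^2*R^2)" using lo pt q2 sT by (intro mult_right_mono) auto
  finally show "p^2 + q^2 \<le> R^2 + 2*T*(p^2/t - 2*i + q^2/s + 2*T*N^2*R^2)" using pR by linarith
qed

lemma real_boundC1:
  fixes t s L r p q i :: real
  assumes t: "t > 0" and s: "s > 0" and ts: "t * s < L" and Lr: "L * r < 1" and r: "r \<ge> 0"
    and i: "i^2 \<le> r * p^2 * q^2" and p: "0 \<le> p" and q: "0 \<le> q"
  shows "p^2/t - 2*i + q^2/s \<ge> min (1 - (1 + L*r)/2) (1 - L*r*(2/(1+L*r))) * (p^2/t + q^2/s)"
proof -
  have L0: "L > 0" using ts t s by (smt (verit) mult_pos_pos)
  have Lr0: "L * r \<ge> 0" using L0 r by simp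
  define mu where "mu = 2/(1+L*r)"
  have mu0: "mu > 0" unfolding mu_def using Lr0 by simp
  have imu: "1/mu = (1+L*r)/2" unfolding mu_def by simp
  define X where "X = q^2/(s*mu)"
  define Y where "Y = s*mu*r*p^2"
  have X0: "X \<ge> 0" unfolding X_def using s mu0 by simp
  have Y0: "Y \<ge> 0" unfolding Y_def using s mu0 r by simp
  have XY: "X*Y = r*p^2*q^2"
  proof -
    have "X*Y = (q^2/(s*mu)) * (s*mu) * (r*p^2)" unfolding X_def Y_def by (simp add: algebra_simps)
    also have "(q^2/(s*mu)) * (s*mu) = q^2" using s mu0 by simp
    finally show ?thesis by (simp add: algebra_simps)
  qed
  have sq: "(2*\<bar>i\<bar>)^2 \<le> (X+Y)^2"
  proof -
    have "(2*\<bar>i\<bar>)^2 = 4*i^2" by (simp add: power2_eq_square)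
    also have "\<dots> \<le> 4*(X*Y)" using i XY by simp
    also have "\<dots> \<le> (X+Y)^2"
    proof -
      have "0 \<le> (X-Y)^2" by simp
      then show ?thesis by (simp add: power2_eq_square algebra_simps)
    qed
    finally show ?thesis .
  qed
  have XY0: "0 \<le> X + Y" using X0 Y0 by simp
  have ii: "2*\<bar>i\<bar> \<le> X + Y" using power2_le_imp_le[OF sq XY0] .
  have A1: "p^2/t - Y = (p^2/t) * (1 - t* s*mu*r)"
  proof -
    have "(p^2/t) * (1 - t* s*mu*r) = p^2/t - (p^2/t*t)*(s*mu*r)" by (simp add: algebra_simps)
    also have "p^2/t*t = p^2" using t by simp
    finally show ?thesis unfolding Y_def by (simp add: algebra_simps)
  qed
  have A2: "q^2/s - X = (q^2/s) * (1 - 1/mu)"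
    unfolding X_def by (simp add: right_diff_distrib)
  have tsm: "t* s*mu*r \<le> L*r*mu"
  proof -
    have "t* s*(mu*r) \<le> L*(mu*r)" using ts mu0 r by (intro mult_right_mono) auto
    then show ?thesis by (simp add: algebra_simps)
  qed
  define d where "d = min (1 - (1 + L*r)/2) (1 - L*r*(2/(1+L*r)))"
  have "d \<le> 1 - L*r*mu" unfolding d_def mu_def by simp
  then have d1: "d \<le> 1 - t* s*mu*r" using tsm by linarith
  have d2: "d \<le> 1 - 1/mu" unfolding d_def imu by simp
  have pt: "p^2/t \<ge> 0" using t by simp
  have qs: "q^2/s \<ge> 0" using s by simp
  have m1: "d*(p^2/t) \<le> (p^2/t)*(1 - t* s*mu*r)" using mult_right_mono[OF d1 pt] by (simp add: mult.commute)
  have m2: "d*(q^2/s) \<le> (q^2/s)*(1 - 1/mu)" using mult_right_mono[OF d2 qs] by (simp add: mult.commute)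
  have "d * (p^2/t + q^2/s) = d*(p^2/t) + d*(q^2/s)" by (simp add: algebra_simps)
  also have "\<dots> \<le> (p^2/t)*(1 - t* s*mu*r) + (q^2/s)*(1 - 1/mu)" using m1 m2 by simp
  also have "\<dots> = p^2/t - Y + (q^2/s - X)" using A1 A2 by simp
  also have "\<dots> \<le> p^2/t - 2*i + q^2/s" using ii by linarith
  finally show ?thesis unfolding d_def .
qed

lemma ip_bound:
  assumes "\<forall>u. norm ((A::real^'n^'m) *v u) \<le> N * norm u"
  shows "\<bar>inner (A *v u) v\<bar> \<le> N * norm u * norm v"
proof -
  have "\<bar>inner (A *v u) v\<bar> \<le> norm (A *v u) * norm v" by (rule Cauchy_Schwarz_ineq2)
  also have "\<dots> \<le> N * norm u * norm v" using assms by (intro mult_right_mono) auto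
  finally show ?thesis .
qed

lemma vboundX:
  fixes A :: "real^'n^'m"
  assumes t: "t > 0" and s: "s > 0" and sT: "s \<le> T" and AN: "\<forall>u. norm (A *v u) \<le> N * norm u"
    and N: "N \<ge> 0" and uR: "norm u \<le> R"
  shows "M_quad t s A u v \<ge> -(2*T*N^2*R^2)"
    and "(norm u)^2 + (norm v)^2 \<le> R^2 + 2*T*(M_quad t s A u v + 2*T*N^2*R^2)"
  using real_boundX[OF t s sT ip_bound[OF AN, of u v] _ uR _ N] unfolding Mq_eq by auto

lemma vboundY:
  fixes A :: "real^'n^'m"
  assumes t: "t > 0" and s: "s > 0" and tT: "t \<le> T" and AN: "\<forall>u. norm (A *v u) \<le> N * norm u"
    and N: "N \<ge> 0" and vR: "norm v \<le> R"
  shows "M_quad t s A u v \<ge> -(2*T*N^2*R^2)"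
    and "(norm u)^2 + (norm v)^2 \<le> R^2 + 2*T*(M_quad t s A u v + 2*T*N^2*R^2)"
proof -
  have i: "\<bar>inner (A *v u) v\<bar> \<le> N * norm v * norm u" using ip_bound[OF AN, of u v] by (simp add: mult_ac)
  have e: "M_quad t s A u v = (norm v)^2/s - 2 * inner (A *v u) v + (norm u)^2/t" unfolding Mq_eq by simp
  show "M_quad t s A u v \<ge> -(2*T*N^2*R^2)"
    using real_boundX(1)[OF s t tT i _ vR _ N] unfolding e by auto
  show "(norm u)^2 + (norm v)^2 \<le> R^2 + 2*T*(M_quad t s A u v + 2*T*N^2*R^2)"
    using real_boundX(2)[OF s t tT i _ vR _ N] unfolding e by auto
qed

lemma vboundC1:
  fixes A :: "real^'n^'m"
  assumes t: "t > 0" and s: "s > 0" and ts: "t * s < L" and Lr: "L * r < 1" and r: "r \<ge> 0"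
    and Ar: "\<forall>u. (norm (A *v u))^2 \<le> r * (norm u)^2"
  shows "M_quad t s A u v \<ge> min (1 - (1 + L*r)/2) (1 - L*r*(2/(1+L*r))) * H_quad t s u v"
proof -
  have "(inner (A *v u) v)^2 \<le> r * (norm u)^2 * (norm v)^2"
  proof -
    have "\<bar>inner (A *v u) v\<bar> \<le> norm (A *v u) * norm v" by (rule Cauchy_Schwarz_ineq2)
    then have "\<bar>inner (A *v u) v\<bar>^2 \<le> (norm (A *v u) * norm v)^2" by (intro power_mono) auto
    also have "\<dots> = (norm (A *v u))^2 * (norm v)^2" by (simp add: power_mult_distrib)
    also have "\<dots> \<le> r * (norm u)^2 * (norm v)^2" using Ar by (intro mult_right_mono) auto
    finally show ?thesis by simp
  qed
  from real_boundC1[OF t s ts Lr r this] show ?thesis unfolding Mq_eq Hq_eq by simp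
qed

lemma E_le_TH:
  fixes t s T p q :: real
  assumes "t > 0" "s > 0" "t \<le> T" "s \<le> T"
  shows "p^2 + q^2 \<le> T * (p^2/t + q^2/s)"
proof -
  have "p^2 = t * (p^2/t)" using assms by simp
  also have "\<dots> \<le> T * (p^2/t)" using assms by (intro mult_right_mono) auto
  finally have 1: "p^2 \<le> T * (p^2/t)" .
  have "q^2 = s * (q^2/s)" using assms by simp
  also have "\<dots> \<le> T * (q^2/s)" using assms by (intro mult_right_mono) auto
  finally have 2: "q^2 \<le> T * (q^2/s)" .
  show ?thesis using 1 2 by (simp add: algebra_simps)
qed

theorem mainTheorem6:
  fixes A :: "real^'n^'m"
    and f :: "real^'n \<Rightarrow> real" and g :: "real^'m \<Rightarrow> real"
    and X :: "(real^'n) set" and Y :: "(real^'m) set"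
    and x :: "nat \<Rightarrow> real^'n" and y :: "nat \<Rightarrow> real^'m"
    and \<tau> \<sigma> :: "nat \<Rightarrow> real"
  assumes f_cvx: "convex_on UNIV f" and g_cvx: "convex_on UNIV g"
    and X_cvx: "convex X" and Y_cvx: "convex Y"
    and feasible: "\<exists>xs ys. - (transpose A *v ys) \<in> subdiff_on f X xs
                          \<and> A *v xs \<in> subdiff_on g Y ys"
    and tau_pos: "\<forall>k. \<tau> k > 0" and sigma_pos: "\<forall>k. \<sigma> k > 0"
    and x_step: "\<forall>k. x (Suc k) \<in> X \<and>
        (\<forall>z\<in>X. f (x (Suc k)) + (norm (x (Suc k) - (x k - \<tau> k *\<^sub>R (transpose A *v y k))))\<^sup>2 / (2 * \<tau> k)
              \<le> f z + (norm (z - (x k - \<tau> k *\<^sub>R (transpose A *v y k))))\<^sup>2 / (2 * \<tau> k))"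
    and y_step: "\<forall>k. y (Suc k) \<in> Y \<and>
        (\<forall>w\<in>Y. g (y (Suc k)) + (norm (y (Suc k) - (y k + \<sigma> k *\<^sub>R (A *v (2 *\<^sub>R x (Suc k) - x k)))))\<^sup>2 / (2 * \<sigma> k)
              \<le> g w + (norm (w - (y k + \<sigma> k *\<^sub>R (A *v (2 *\<^sub>R x (Suc k) - x k)))))\<^sup>2 / (2 * \<sigma> k))"
    and condA: "bounded (range \<tau>) \<and> bounded (range \<sigma>)"
    and condB: "\<exists>C. summable (\<lambda>k. max (max ((\<tau> k - \<tau> (Suc k)) / \<tau> k) ((\<sigma> k - \<sigma> (Suc k)) / \<sigma> k)) 0)
                  \<and> (\<Sum>k. max (max ((\<tau> k - \<tau> (Suc k)) / \<tau> k) ((\<sigma> k - \<sigma> (Suc k)) / \<sigma> k)) 0) < C"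
    and condC: "(\<exists>L. L * spec_radius (transpose A ** A) < 1 \<and> (\<forall>k>0. \<tau> k * \<sigma> k < L))
              \<or> ((bounded X \<or> bounded Y) \<and>
                 (\<exists>c. 0 < c \<and> c < 1 \<and> (\<forall>k>0.
                    M_quad (\<tau> k) (\<sigma> k) A (x (Suc k) - x k) (y (Suc k) - y k)
                    \<ge> c * H_quad (\<tau> k) (\<sigma> k) (x (Suc k) - x k) (y (Suc k) - y k))))"
  shows "(\<lambda>k. (norm ((1 / \<tau> k) *\<^sub>R (x k - x (Suc k)) - transpose A *v (y k - y (Suc k))))\<^sup>2
             + (norm ((1 / \<sigma> k) *\<^sub>R (y k - y (Suc k)) - A *v (x k - x (Suc k))))\<^sup>2)
         \<longlonglongrightarrow> 0"
proof -
  obtain xs ys where xs_sub: "- (transpose A *v ys) \<in> subdiff_on f X xs"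
    and ys_sub: "A *v xs \<in> subdiff_on g Y ys" using feasible by blast
  have xsX: "xs \<in> X" and fxs: "\<forall>z\<in>X. f xs + inner (- (transpose A *v ys)) (z - xs) \<le> f z"
    using xs_sub unfolding subdiff_on_def by auto
  have ysY: "ys \<in> Y" and gys: "\<forall>z\<in>Y. g ys + inner (A *v xs) (z - ys) \<le> g z"
    using ys_sub unfolding subdiff_on_def by auto
  define phi where "phi k = max (max ((\<tau> k - \<tau> (Suc k)) / \<tau> k) ((\<sigma> k - \<sigma> (Suc k)) / \<sigma> k)) 0" for k
  have sphi: "summable phi" using condB unfolding phi_def by blast
  have phi0: "phi k \<ge> 0" for k unfolding phi_def by simp
  have tstep: "\<tau> (Suc k) \<ge> \<tau> k * (1 - phi k)" for k
  proof -
    have "(\<tau> k - \<tau> (Suc k)) / \<tau> k \<le> phi k" unfolding phi_def by simp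
    then have "\<tau> k - \<tau> (Suc k) \<le> phi k * \<tau> k" using tau_pos by (simp add: divide_le_eq)
    then show ?thesis by (simp add: algebra_simps)
  qed
  have sstep: "\<sigma> (Suc k) \<ge> \<sigma> k * (1 - phi k)" for k
  proof -
    have "(\<sigma> k - \<sigma> (Suc k)) / \<sigma> k \<le> phi k" unfolding phi_def by simp
    then have "\<sigma> k - \<sigma> (Suc k) \<le> phi k * \<sigma> k" using sigma_pos by (simp add: divide_le_eq)
    then show ?thesis by (simp add: algebra_simps)
  qed
  obtain mt where mt: "mt > 0" "\<forall>k. \<tau> k \<ge> mt"
    using lower_bound[of \<tau> phi] tau_pos phi0 sphi tstep by blast
  obtain ms where ms: "ms > 0" "\<forall>k. \<sigma> k \<ge> ms"
    using lower_bound[of \<sigma> phi] sigma_pos phi0 sphi sstep by blast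
  define m where "m = min mt ms"
  have m0: "m > 0" unfolding m_def using mt ms by simp
  have tm: "\<tau> k \<ge> m" for k unfolding m_def using mt by (meson min.coboundedI1)
  have sm: "\<sigma> k \<ge> m" for k unfolding m_def using ms by (meson min.coboundedI2)
  obtain T1 where T1: "\<forall>z\<in>range \<tau>. norm z \<le> T1" using condA bounded_iff by metis
  obtain T2 where T2: "\<forall>z\<in>range \<sigma>. norm z \<le> T2" using condA bounded_iff by metis
  define T where "T = max T1 T2"
  have tT: "\<tau> k \<le> T" for k using T1 unfolding T_def by (smt (verit) rangeI real_norm_def)
  have sT: "\<sigma> k \<le> T" for k using T2 unfolding T_def by (smt (verit) rangeI real_norm_def)
  have T0: "T > 0" using tT[of 0] tau_pos by (meson less_le_trans)
  obtain NA0 where NA0: "NA0 > 0" "\<forall>u. norm (A *v u) \<le> norm u * NA0"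
    using bounded_linear.pos_bounded[OF matrix_vector_mul_bounded_linear[of A]] by blast
  define NA where "NA = NA0"
  have NA: "NA \<ge> 0" "\<forall>u. norm (A *v u) \<le> NA * norm u" using NA0 unfolding NA_def by (auto simp: mult.commute)
  obtain NB0 where NB0: "NB0 > 0" "\<forall>u. norm (transpose A *v u) \<le> norm u * NB0"
    using bounded_linear.pos_bounded[OF matrix_vector_mul_bounded_linear[of "transpose A"]] by blast
  define NB where "NB = NB0"
  have NB: "NB \<ge> 0" "\<forall>u. norm (transpose A *v u) \<le> NB * norm u" using NB0 unfolding NB_def by (auto simp: mult.commute)
  define a where "a k = x k - xs" for k
  define b where "b k = y k - ys" for k
  define dx where "dx k = x (Suc k) - x k" for k
  define dy where "dy k = y (Suc k) - y k" for k
  define V where "V k = M_quad (\<tau> k) (\<sigma> k) A (a k) (b k)" for k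
  define Z where "Z k = M_quad (\<tau> k) (\<sigma> k) A (a (Suc k)) (b (Suc k))" for k
  define w where "w k = M_quad (\<tau> k) (\<sigma> k) A (dx k) (dy k)" for k
  define E where "E k = (norm (a (Suc k)))^2 + (norm (b (Suc k)))^2" for k
  define H where "H k = H_quad (\<tau> k) (\<sigma> k) (dx k) (dy k)" for k
  have H0: "H k \<ge> 0" for k unfolding H_def Hq_eq using tau_pos sigma_pos
    by (meson add_nonneg_nonneg divide_nonneg_pos zero_le_power2)
  have xX: "x (Suc k) \<in> X" for k using x_step by blast
  have yY: "y (Suc k) \<in> Y" for k using y_step by blast
  have fej: "Z k + w k \<le> V k" for k
  proof -
    let ?t = "\<tau> k" and ?s = "\<sigma> k"
    have t: "?t > 0" using tau_pos by blast
    have s: "?s > 0" using sigma_pos by blast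
    define cx where "cx = x k - ?t *\<^sub>R (transpose A *v y k)"
    define cy where "cy = y k + ?s *\<^sub>R (A *v (2 *\<^sub>R x (Suc k) - x k))"
    have optx: "\<forall>z\<in>X. f (x (Suc k)) + (norm (x (Suc k) - cx))\<^sup>2 / (2 * ?t) \<le> f z + (norm (z - cx))\<^sup>2 / (2 * ?t)"
      using x_step unfolding cx_def by blast
    have opty: "\<forall>z\<in>Y. g (y (Suc k)) + (norm (y (Suc k) - cy))\<^sup>2 / (2 * ?s) \<le> g z + (norm (z - cy))\<^sup>2 / (2 * ?s)"
      using y_step unfolding cy_def by blast
    have I1: "f (x (Suc k)) + inner ((1 / ?t) *\<^sub>R (cx - x (Suc k))) (xs - x (Suc k)) \<le> f xs"
      by (rule prox_vi[OF f_cvx X_cvx xX t optx xsX])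
    have I2: "f xs + inner (- (transpose A *v ys)) (x (Suc k) - xs) \<le> f (x (Suc k))"
      using fxs xX by blast
    have J1: "g (y (Suc k)) + inner ((1 / ?s) *\<^sub>R (cy - y (Suc k))) (ys - y (Suc k)) \<le> g ys"
      by (rule prox_vi[OF g_cvx Y_cvx yY s opty ysY])
    have J2: "g ys + inner (A *v xs) (y (Suc k) - ys) \<le> g (y (Suc k))"
      using gys yY by blast
    have ex: "(1 / ?t) *\<^sub>R (cx - x (Suc k)) = (1 / ?t) *\<^sub>R (a k - a (Suc k)) - transpose A *v y k"
      unfolding cx_def a_def using t by (simp add: algebra_simps)
    have ey: "(1 / ?s) *\<^sub>R (cy - y (Suc k)) = (1 / ?s) *\<^sub>R (b k - b (Suc k)) + A *v (2 *\<^sub>R x (Suc k) - x k)"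
      unfolding cy_def b_def using s by (simp add: algebra_simps)
    have h1: "inner (a k - a (Suc k)) (a (Suc k)) / ?t - inner (b k) (A *v a (Suc k)) \<ge> 0"
    proof -
      have "inner ((1 / ?t) *\<^sub>R (cx - x (Suc k))) (xs - x (Suc k)) + inner (- (transpose A *v ys)) (x (Suc k) - xs) \<le> 0"
        using I1 I2 by linarith
      moreover have "xs - x (Suc k) = - a (Suc k)" "x (Suc k) - xs = a (Suc k)" unfolding a_def by auto
      moreover have "y k = b k + ys" unfolding b_def by simp
      ultimately have "inner ((1 / ?t) *\<^sub>R (a k - a (Suc k)) - transpose A *v (b k + ys)) (- a (Suc k)) + inner (- (transpose A *v ys)) (a (Suc k)) \<le> 0"
        unfolding ex by simp
      then have "- (inner (a k - a (Suc k)) (a (Suc k)) / ?t) + inner (transpose A *v b k) (a (Suc k)) \<le> 0"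
        by (simp add: inner_diff_left inner_add_left matrix_vector_right_distrib algebra_simps diff_divide_distrib)
      then show ?thesis by (simp add: dot_lmul_matrix diff_divide_distrib)
    qed
    have h2: "inner (b k - b (Suc k)) (b (Suc k)) / ?s + inner (A *v (2 *\<^sub>R a (Suc k) - a k)) (b (Suc k)) \<ge> 0"
    proof -
      have "inner ((1 / ?s) *\<^sub>R (cy - y (Suc k))) (ys - y (Suc k)) + inner (A *v xs) (y (Suc k) - ys) \<le> 0"
        using J1 J2 by linarith
      moreover have "ys - y (Suc k) = - b (Suc k)" "y (Suc k) - ys = b (Suc k)" unfolding b_def by auto
      moreover have "2 *\<^sub>R x (Suc k) - x k = (2 *\<^sub>R a (Suc k) - a k) + xs" unfolding a_def by (simp add: scaleR_2 algebra_simps)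
      ultimately have "inner ((1 / ?s) *\<^sub>R (b k - b (Suc k)) + A *v ((2 *\<^sub>R a (Suc k) - a k) + xs)) (- b (Suc k)) + inner (A *v xs) (b (Suc k)) \<le> 0"
        unfolding ey by simp
      then show ?thesis
        by (simp add: inner_diff_left inner_add_left matrix_vector_right_distrib algebra_simps diff_divide_distrib)
    qed
    have "M_quad ?t ?s A (a (Suc k)) (b (Suc k)) + M_quad ?t ?s A (a (Suc k) - a k) (b (Suc k) - b k) \<le> M_quad ?t ?s A (a k) (b k)"
      by (rule fejer_alg[OF t s h1 h2])
    moreover have "a (Suc k) - a k = dx k" "b (Suc k) - b k = dy k" unfolding a_def b_def dx_def dy_def by auto
    ultimately show ?thesis unfolding Z_def w_def V_def by simp
  qed
  have inc: "V (Suc k) \<le> Z k + (phi k / m) * E k" for k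
  proof -
    have rt: "1 / \<tau> (Suc k) - 1 / \<tau> k \<le> phi k / m"
    proof -
      have t0: "\<tau> k > 0" "\<tau> (Suc k) > 0" using tau_pos by auto
      have "1 / \<tau> (Suc k) - 1 / \<tau> k = ((\<tau> k - \<tau> (Suc k)) / \<tau> k) / \<tau> (Suc k)"
        using t0 by (simp add: field_simps)
      also have "\<dots> \<le> phi k / \<tau> (Suc k)" using t0 unfolding phi_def by (intro divide_right_mono) auto
      also have "\<dots> \<le> phi k / m" using phi0[of k] tm[of "Suc k"] m0 t0 by (intro divide_left_mono) auto
      finally show ?thesis .
    qed
    have rs: "1 / \<sigma> (Suc k) - 1 / \<sigma> k \<le> phi k / m"
    proof -
      have t0: "\<sigma> k > 0" "\<sigma> (Suc k) > 0" using sigma_pos by auto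
      have "1 / \<sigma> (Suc k) - 1 / \<sigma> k = ((\<sigma> k - \<sigma> (Suc k)) / \<sigma> k) / \<sigma> (Suc k)"
        using t0 by (simp add: field_simps)
      also have "\<dots> \<le> phi k / \<sigma> (Suc k)" using t0 unfolding phi_def by (intro divide_right_mono) auto
      also have "\<dots> \<le> phi k / m" using phi0[of k] sm[of "Suc k"] m0 t0 by (intro divide_left_mono) auto
      finally show ?thesis .
    qed
    have "V (Suc k) - Z k = (norm (a (Suc k)))^2 * (1 / \<tau> (Suc k) - 1 / \<tau> k) + (norm (b (Suc k)))^2 * (1 / \<sigma> (Suc k) - 1 / \<sigma> k)"
      unfolding V_def Z_def Mq_eq by (simp add: algebra_simps)
    also have "\<dots> \<le> (norm (a (Suc k)))^2 * (phi k / m) + (norm (b (Suc k)))^2 * (phi k / m)"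
      using rt rs by (intro add_mono mult_left_mono) auto
    also have "\<dots> = (phi k / m) * E k" unfolding E_def by (simp add: algebra_simps)
    finally show ?thesis by simp
  qed
  have key: "\<exists>K al be c. K \<ge> 0 \<and> al \<ge> 0 \<and> be \<ge> 0 \<and> c > 0 \<and>
      (\<forall>k\<ge>1. V k \<ge> -K \<and> Z k \<ge> -K \<and> E k \<le> al * (Z k + K) + be \<and> w k \<ge> c * H k)"
  proof (cases "\<exists>L. L * spec_radius (transpose A ** A) < 1 \<and> (\<forall>k>0. \<tau> k * \<sigma> k < L)")
    case True
    then obtain L where Lr: "L * spec_radius (transpose A ** A) < 1" and Lk: "\<forall>k>0. \<tau> k * \<sigma> k < L" by blast
    define r where "r = spec_radius (transpose A ** A)"
    have Ar: "\<forall>u. (norm (A *v u))^2 \<le> r * (norm u)^2" unfolding r_def using norm_matrix_bound by blast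
    have r0: "r \<ge> 0"
    proof (rule ccontr)
      assume "\<not> r \<ge> 0"
      obtain i :: 'n where True by simp
      have "(norm (A *v axis i 1))^2 \<le> r * (norm (axis i (1::real)))^2" using Ar by blast
      then have "(norm (A *v axis i 1))^2 \<le> r" by simp
      moreover have "(norm (A *v axis i 1))^2 \<ge> 0" by simp
      ultimately show False using \<open>\<not> r \<ge> 0\<close> by linarith
    qed
    have Lr': "L * r < 1" using Lr unfolding r_def .
    define del where "del = min (1 - (1 + L*r)/2) (1 - L*r*(2/(1+L*r)))"
    have del0: "del > 0"
    proof -
      have p1: "0 < \<tau> 1 * \<sigma> 1" using tau_pos sigma_pos by simp
      have "\<tau> 1 * \<sigma> 1 < L" using Lk by simp
      then have L0: "L > 0" using p1 by linarith
      have Lr0: "L * r \<ge> 0" using L0 r0 by simp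
      have e: "L*r*(2/(1+L*r)) = (2*(L*r))/(1+L*r)" by simp
      have "(2*(L*r))/(1+L*r) < 1" using Lr0 Lr' by (subst divide_less_eq) simp
      then have "L*r*(2/(1+L*r)) < 1" unfolding e .
      moreover have "(1 + L*r)/2 < 1" using Lr' by simp
      ultimately show ?thesis unfolding del_def by simp
    qed
    have qb: "M_quad (\<tau> k) (\<sigma> k) A u v \<ge> del * H_quad (\<tau> k) (\<sigma> k) u v" if "k \<ge> 1" for k u v
      unfolding del_def
      by (rule vboundC1[OF _ _ _ Lr' r0 Ar]) (use tau_pos sigma_pos Lk that in auto)
    have Hn: "H_quad (\<tau> k) (\<sigma> k) u v \<ge> 0" for k u v
      unfolding Hq_eq using tau_pos sigma_pos by (meson add_nonneg_nonneg divide_nonneg_pos zero_le_power2)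
    show ?thesis
    proof (intro exI conjI allI impI)
      show "(0::real) \<ge> 0" by simp
      show "T / del \<ge> 0" using T0 del0 by simp
      show "(0::real) \<ge> 0" by simp
      show "del > 0" by (rule del0)
      fix k :: nat assume k: "k \<ge> 1"
      show "V k \<ge> -0" unfolding V_def using qb[OF k] Hn[of k] del0
        by (smt (verit) mult_nonneg_nonneg)
      show "Z k \<ge> -0" unfolding Z_def using qb[OF k] Hn[of k] del0
        by (smt (verit) mult_nonneg_nonneg)
      show "w k \<ge> del * H k" unfolding w_def H_def using qb[OF k] .
      have "E k \<le> T * H_quad (\<tau> k) (\<sigma> k) (a (Suc k)) (b (Suc k))"
        unfolding E_def Hq_eq using tau_pos sigma_pos tT sT by (intro E_le_TH) auto
      also have "\<dots> \<le> T * (Z k / del)"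
      proof -
        have "del * H_quad (\<tau> k) (\<sigma> k) (a (Suc k)) (b (Suc k)) \<le> Z k" unfolding Z_def using qb[OF k] .
        then have "H_quad (\<tau> k) (\<sigma> k) (a (Suc k)) (b (Suc k)) \<le> Z k / del" using del0
          by (simp add: le_divide_eq mult.commute)
        then show ?thesis using T0 by (intro mult_left_mono) auto
      qed
      finally show "E k \<le> T / del * (Z k + 0) + 0" by simp
    qed
  next
    case False
    then have C2: "(bounded X \<or> bounded Y)" and
      "\<exists>c. 0 < c \<and> c < 1 \<and> (\<forall>k>0. M_quad (\<tau> k) (\<sigma> k) A (x (Suc k) - x k) (y (Suc k) - y k)
                    \<ge> c * H_quad (\<tau> k) (\<sigma> k) (x (Suc k) - x k) (y (Suc k) - y k))"
      using condC by auto
    then obtain c0 where c0: "c0 > 0" and wc: "\<forall>k>0. w k \<ge> c0 * H k"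
      unfolding w_def H_def dx_def dy_def by blast
    have xk: "x k \<in> X" if "k \<ge> 1" for k using xX[of "k - 1"] that by simp
    have yk: "y k \<in> Y" if "k \<ge> 1" for k using yY[of "k - 1"] that by simp
    show ?thesis
    proof (cases "bounded X")
      case True
      then obtain R0 where R0: "\<forall>z\<in>X. norm z \<le> R0" unfolding bounded_iff by blast
      define R where "R = R0 + norm xs"
      have aR: "norm (a k) \<le> R" if "k \<ge> 1" for k
        unfolding a_def R_def using R0 xk[OF that] by (smt (verit) norm_triangle_ineq4)
      show ?thesis
      proof (intro exI conjI allI impI)
        show "2*T*NA^2*R^2 \<ge> 0" using T0 by simp
        show "2*T \<ge> 0" using T0 by simp
        show "R^2 \<ge> 0" by simp
        show "c0 > 0" by (rule c0)
        fix k :: nat assume k: "k \<ge> 1"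
        have t: "\<tau> k > 0" "\<sigma> k > 0" using tau_pos sigma_pos by auto
        show "V k \<ge> - (2*T*NA^2*R^2)" unfolding V_def
          by (rule vboundX(1)[OF t sT NA(2) NA(1) aR[OF k]])
        show "Z k \<ge> - (2*T*NA^2*R^2)" unfolding Z_def
          by (rule vboundX(1)[OF t sT NA(2) NA(1) aR]) (use k in simp)
        show "E k \<le> 2*T * (Z k + 2*T*NA^2*R^2) + R^2" unfolding E_def Z_def
          using vboundX(2)[OF t sT NA(2) NA(1) aR[of "Suc k"], of "b (Suc k)"] by simp
        show "w k \<ge> c0 * H k" using wc k by simp
      qed
    next
      case False
      then have "bounded Y" using C2 by blast
      then obtain R0 where R0: "\<forall>z\<in>Y. norm z \<le> R0" unfolding bounded_iff by blast
      define R where "R = R0 + norm ys"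
      have bR: "norm (b k) \<le> R" if "k \<ge> 1" for k
        unfolding b_def R_def using R0 yk[OF that] by (smt (verit) norm_triangle_ineq4)
      show ?thesis
      proof (intro exI conjI allI impI)
        show "2*T*NA^2*R^2 \<ge> 0" using T0 by simp
        show "2*T \<ge> 0" using T0 by simp
        show "R^2 \<ge> 0" by simp
        show "c0 > 0" by (rule c0)
        fix k :: nat assume k: "k \<ge> 1"
        have t: "\<tau> k > 0" "\<sigma> k > 0" using tau_pos sigma_pos by auto
        show "V k \<ge> - (2*T*NA^2*R^2)" unfolding V_def
          by (rule vboundY(1)[OF t tT NA(2) NA(1) bR[OF k]])
        show "Z k \<ge> - (2*T*NA^2*R^2)" unfolding Z_def
          by (rule vboundY(1)[OF t tT NA(2) NA(1) bR]) (use k in simp)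
        show "E k \<le> 2*T * (Z k + 2*T*NA^2*R^2) + R^2" unfolding E_def Z_def
          using vboundY(2)[OF t tT NA(2) NA(1) bR[of "Suc k"], of "a (Suc k)"] by simp
        show "w k \<ge> c0 * H k" using wc k by simp
      qed
    qed
  qed
  then obtain K al be c where K: "K \<ge> 0" and al: "al \<ge> 0" and be: "be \<ge> 0" and c: "c > 0"
    and kb: "\<And>k. k \<ge> 1 \<Longrightarrow> V k \<ge> -K \<and> Z k \<ge> -K \<and> E k \<le> al * (Z k + K) + be \<and> w k \<ge> c * H k"
    by blast
  have kbS: "V (Suc k) \<ge> -K \<and> Z (Suc k) \<ge> -K \<and> E (Suc k) \<le> al * (Z (Suc k) + K) + be \<and> w (Suc k) \<ge> c * H (Suc k)" for k
    by (rule kb) simp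
  define U where "U k = V (Suc k) + K" for k
  define d where "d k = al * phi (Suc k) / m" for k
  define e where "e k = be * phi (Suc k) / m" for k
  have wS: "(\<lambda>k. w (Suc k)) \<longlonglongrightarrow> 0"
  proof (rule seq_conv[of U _ d e])
    show "U k \<ge> 0" for k
    proof -
      have "V (Suc k) \<ge> -K" using kbS[of k] by blast
      then show ?thesis unfolding U_def by linarith
    qed
    show "w (Suc k) \<ge> 0" for k
    proof -
      have "w (Suc k) \<ge> c * H (Suc k)" using kbS[of k] by blast
      moreover have "c * H (Suc k) \<ge> 0" using c H0[of "Suc k"] by simp
      ultimately show ?thesis by linarith
    qed
    show "d k \<ge> 0" for k unfolding d_def using al phi0 m0 by simp
    show "e k \<ge> 0" for k unfolding e_def using be phi0 m0 by simp
    have sphiS: "summable (\<lambda>k. phi (Suc k))" using sphi summable_ignore_initial_segment[of phi 1] by simp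
    show "summable d" unfolding d_def using summable_divide[OF summable_mult[OF sphiS, of al], of m] by simp
    show "summable e" unfolding e_def using summable_divide[OF summable_mult[OF sphiS, of be], of m] by simp
    show "U (Suc k) \<le> (1 + d k) * (U k - w (Suc k)) + e k" for k
    proof -
      have b1: "Z (Suc k) \<ge> -K" "E (Suc k) \<le> al * (Z (Suc k) + K) + be" using kbS[of k] by blast+
      have "U (Suc k) \<le> Z (Suc k) + (phi (Suc k) / m) * E (Suc k) + K" unfolding U_def using inc[of "Suc k"] by simp
      also have "\<dots> \<le> Z (Suc k) + (phi (Suc k) / m) * (al * (Z (Suc k) + K) + be) + K"
        using b1 phi0 m0 by (intro add_mono mult_left_mono) auto
      also have "\<dots> = (1 + d k) * (Z (Suc k) + K) + e k" unfolding d_def e_def by (simp add: algebra_simps add_divide_distrib)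
      also have "\<dots> \<le> (1 + d k) * (U k - w (Suc k)) + e k"
      proof -
        have "Z (Suc k) + K \<le> U k - w (Suc k)" using fej[of "Suc k"] unfolding U_def by simp
        moreover have "1 + d k \<ge> 0" unfolding d_def using al phi0 m0 by simp
        ultimately show ?thesis by (simp add: mult_left_mono)
      qed
      finally show ?thesis .
    qed
  qed
  have ssS: "(\<lambda>k. (norm (dx (Suc k)))^2 + (norm (dy (Suc k)))^2) \<longlonglongrightarrow> 0"
  proof (rule tendsto_sandwich[of "\<lambda>_. 0" _ _ "\<lambda>k. T * (w (Suc k) / c)"])
    show "\<forall>\<^sub>F k in sequentially. 0 \<le> (norm (dx (Suc k)))^2 + (norm (dy (Suc k)))^2" by simp
    show "\<forall>\<^sub>F k in sequentially. (norm (dx (Suc k)))^2 + (norm (dy (Suc k)))^2 \<le> T * (w (Suc k) / c)"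
    proof (rule always_eventually, rule allI)
      fix k
      have "(norm (dx (Suc k)))^2 + (norm (dy (Suc k)))^2 \<le> T * H (Suc k)"
        unfolding H_def Hq_eq using tau_pos sigma_pos tT sT by (intro E_le_TH) auto
      also have "\<dots> \<le> T * (w (Suc k) / c)"
      proof -
        have "c * H (Suc k) \<le> w (Suc k)" using kbS[of k] by blast
        then have "H (Suc k) \<le> w (Suc k) / c" using c by (simp add: le_divide_eq mult.commute)
        then show ?thesis using T0 by (intro mult_left_mono) auto
      qed
      finally show "(norm (dx (Suc k)))^2 + (norm (dy (Suc k)))^2 \<le> T * (w (Suc k) / c)" .
    qed
    show "(\<lambda>_. 0) \<longlonglongrightarrow> (0::real)" by simp
    show "(\<lambda>k. T * (w (Suc k) / c)) \<longlonglongrightarrow> 0"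
      using tendsto_mult[OF tendsto_const[of T] tendsto_divide[OF wS tendsto_const[of c]]] c by simp
  qed
  then have ss: "(\<lambda>k. (norm (dx k))^2 + (norm (dy k))^2) \<longlonglongrightarrow> 0" by (rule LIMSEQ_imp_Suc)
  have sq: "(\<lambda>k. sqrt ((norm (dx k))^2 + (norm (dy k))^2)) \<longlonglongrightarrow> 0"
    using tendsto_real_sqrt[OF ss] by simp
  have ndx: "(\<lambda>k. norm (dx k)) \<longlonglongrightarrow> 0"
  proof (rule tendsto_sandwich[of "\<lambda>_. 0" _ _ "\<lambda>k. sqrt ((norm (dx k))^2 + (norm (dy k))^2)"])
    show "\<forall>\<^sub>F k in sequentially. 0 \<le> norm (dx k)" by simp
    show "\<forall>\<^sub>F k in sequentially. norm (dx k) \<le> sqrt ((norm (dx k))^2 + (norm (dy k))^2)"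
      by (rule always_eventually) (simp add: real_le_rsqrt)
  qed (use sq in auto)
  have ndy: "(\<lambda>k. norm (dy k)) \<longlonglongrightarrow> 0"
  proof (rule tendsto_sandwich[of "\<lambda>_. 0" _ _ "\<lambda>k. sqrt ((norm (dx k))^2 + (norm (dy k))^2)"])
    show "\<forall>\<^sub>F k in sequentially. 0 \<le> norm (dy k)" by simp
    show "\<forall>\<^sub>F k in sequentially. norm (dy k) \<le> sqrt ((norm (dx k))^2 + (norm (dy k))^2)"
      by (rule always_eventually) (simp add: real_le_rsqrt)
  qed (use sq in auto)
  define G where "G k = (norm (dx k) / m + NB * norm (dy k))^2 + (norm (dy k) / m + NA * norm (dx k))^2" for k
  have "G \<longlonglongrightarrow> (0 / m + NB * 0)^2 + (0 / m + NA * 0)^2" unfolding G_def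
    using m0 by (intro tendsto_intros ndx ndy) auto
  then have G: "G \<longlonglongrightarrow> 0" by simp
  have P: "norm ((1 / \<tau> k) *\<^sub>R (x k - x (Suc k)) - transpose A *v (y k - y (Suc k))) \<le> norm (dx k) / m + NB * norm (dy k)" for k
  proof -
    have "norm ((1 / \<tau> k) *\<^sub>R (x k - x (Suc k)) - transpose A *v (y k - y (Suc k)))
        \<le> norm ((1 / \<tau> k) *\<^sub>R (x k - x (Suc k))) + norm (transpose A *v (y k - y (Suc k)))"
      by (rule norm_triangle_ineq4)
    also have "\<dots> \<le> norm (dx k) / \<tau> k + NB * norm (dy k)"
    proof (rule add_mono)
      show "norm ((1 / \<tau> k) *\<^sub>R (x k - x (Suc k))) \<le> norm (dx k) / \<tau> k"
        using tau_pos[rule_format, of k] unfolding dx_def by (simp add: norm_minus_commute)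
      show "norm (transpose A *v (y k - y (Suc k))) \<le> NB * norm (dy k)"
        using NB(2) unfolding dy_def by (metis norm_minus_commute)
    qed
    also have "\<dots> \<le> norm (dx k) / m + NB * norm (dy k)"
      using tm[of k] m0 by (intro add_mono divide_left_mono) auto
    finally show ?thesis .
  qed
  have D: "norm ((1 / \<sigma> k) *\<^sub>R (y k - y (Suc k)) - A *v (x k - x (Suc k))) \<le> norm (dy k) / m + NA * norm (dx k)" for k
  proof -
    have "norm ((1 / \<sigma> k) *\<^sub>R (y k - y (Suc k)) - A *v (x k - x (Suc k)))
        \<le> norm ((1 / \<sigma> k) *\<^sub>R (y k - y (Suc k))) + norm (A *v (x k - x (Suc k)))"
      by (rule norm_triangle_ineq4)
    also have "\<dots> \<le> norm (dy k) / \<sigma> k + NA * norm (dx k)"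
    proof (rule add_mono)
      show "norm ((1 / \<sigma> k) *\<^sub>R (y k - y (Suc k))) \<le> norm (dy k) / \<sigma> k"
        using sigma_pos[rule_format, of k] unfolding dy_def by (simp add: norm_minus_commute)
      show "norm (A *v (x k - x (Suc k))) \<le> NA * norm (dx k)"
        using NA(2) unfolding dx_def by (metis norm_minus_commute)
    qed
    also have "\<dots> \<le> norm (dy k) / m + NA * norm (dx k)"
      using sm[of k] m0 by (intro add_mono divide_left_mono) auto
    finally show ?thesis .
  qed
  show ?thesis
  proof (rule tendsto_sandwich[of "\<lambda>_. 0" _ _ G])
    show "\<forall>\<^sub>F k in sequentially. 0 \<le> (norm ((1 / \<tau> k) *\<^sub>R (x k - x (Suc k)) - transpose A *v (y k - y (Suc k))))\<^sup>2
             + (norm ((1 / \<sigma> k) *\<^sub>R (y k - y (Suc k)) - A *v (x k - x (Suc k))))\<^sup>2" by simp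
    show "\<forall>\<^sub>F k in sequentially. (norm ((1 / \<tau> k) *\<^sub>R (x k - x (Suc k)) - transpose A *v (y k - y (Suc k))))\<^sup>2
             + (norm ((1 / \<sigma> k) *\<^sub>R (y k - y (Suc k)) - A *v (x k - x (Suc k))))\<^sup>2 \<le> G k"
    proof (rule always_eventually, rule allI)
      fix k
      show "(norm ((1 / \<tau> k) *\<^sub>R (x k - x (Suc k)) - transpose A *v (y k - y (Suc k))))\<^sup>2
             + (norm ((1 / \<sigma> k) *\<^sub>R (y k - y (Suc k)) - A *v (x k - x (Suc k))))\<^sup>2 \<le> G k"
        unfolding G_def by (intro add_mono power_mono P D) auto
    qed
  qed (use G in auto)
qed

end
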